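(* Write $E\cong\mathcal O(m_1)\oplus\mathcal O(m_2)$ with $m_1\ge m_2$. Then $\mathrm{QPH}_{\mathbb C^*}(E)$ is nonempty if and only if $m_1-m_2\le 2$. Moreover, for a line subbundle $L\subset E$, there exists $(F_1,\dots,F_4,\Phi)\in\mathrm{QPH}(E)$ with $\Phi$ nonzero and nilpotent whose unique $\Phi$-invariant line subbundle $L(\Phi)$ equals $L$ if and only if $2(\deg L+1)\ge \deg E$.
   Context: Fix $z_1\in\mathbb{CP}^1\setminus\{0,1,\infty\}$, set $z_2=0$, $z_3=1$, $z_4=\infty$ and $D=z_1+z_2+z_3+z_4$. Let $E\to\mathbb{CP}^1$ be a holomorphic vector bundle of rank 2 and degree $d$, $E\cong\mathcal O(m_1)\oplus\mathcal O(m_2)$, $m_1\ge m_2$, $m_1+m_2=d$. A quasi-parabolic structure on $E$ is a tuple $(F_1,\dots,F_4)$ of lines $F_i\subset E|_{z_i}$. A (strongly) parabolic Higgs field compatible with it is $\Phi\in H^0(\mathbb{CP}^1,\mathrm{End}(E)\otimes K_{\mathbb{CP}^1}(D))$ such that each residue $\mathrm{Res}_{z_i}\Phi$ is nilpotent with $F_i\subset\ker\mathrm{Res}_{z_i}\Phi$. $\mathrm{QPH}(E)$ is the space of all such tuples $(F_1,\dots,F_4,\Phi)$. The determinant map $\det:\mathrm{QPH}(E)\to H^0(\mathbb{CP}^1,K^2_{\mathbb{CP}^1}(D))\cong\mathbb C$ sends $(F,\Phi)\mapsto\det\Phi$; $\mathrm{QPH}_0(E)=\det^{-1}(0)$ and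 $\mathrm{QPH}_{\mathbb C^*}(E)=\mathrm{QPH}(E)\setminus\mathrm{QPH}_0(E)$. A nonzero nilpotent parabolic Higgs field $\Phi$ preserves a unique line subbundle $L(\Phi)\subset E$ (determined by $\ker\Phi$). *)

theory Defs
  imports "HOL-Analysis.Analysis" "HOL-Computational_Algebra.Polynomial"
begin

text \<open>Concrete model. E = O(m1) + O(m2) on CP^1 with affine coordinate z.
  Sections of O(m) are polynomials of degree at most m (frame at infinity: z^m).
  K(D), D = z1 + 0 + 1 + inf, is trivialised by the section dz/q(z),
  q(z) = z (z - 1) (z - z1).  A parabolic Higgs field Phi in
  H^0(End E (x) K(D)) is Phi = M(z) dz/q(z), where M is a 2x2 matrix of
  polynomials with deg M_ij \<le> m_i - m_j + 2 (M_ij = 0 if this is negative).\<close>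

definition mdeg :: "int \<Rightarrow> int \<Rightarrow> 2 \<Rightarrow> int" where
  "mdeg m1 m2 i = (if i = 1 then m1 else m2)"

definition higgs_field :: "int \<Rightarrow> int \<Rightarrow> complex poly ^2^2 \<Rightarrow> bool" where
  "higgs_field m1 m2 M \<longleftrightarrow>
     (\<forall>i j k. coeff (M$i$j) k \<noteq> 0 \<longrightarrow> int k \<le> mdeg m1 m2 i - mdeg m1 m2 j + 2)"

definition evalM :: "complex poly ^2^2 \<Rightarrow> complex \<Rightarrow> complex^2^2" where
  "evalM M z = (\<chi> i j. poly (M$i$j) z)"

definition qpoly :: "complex \<Rightarrow> complex poly" where
  "qpoly z1 = [:0, 1:] * [:-1, 1:] * [:-z1, 1:]"

text \<open>Marked points z_1 = z1, z_2 = 0, z_3 = 1 (z_4 = infinity).\<close>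
definition zpt :: "complex \<Rightarrow> nat \<Rightarrow> complex" where
  "zpt z1 k = (if k = 1 then z1 else if k = 2 then 0 else 1)"

text \<open>Residue of Phi = M dz/q at a finite marked point a (in the affine frame).\<close>
definition res_fin :: "complex \<Rightarrow> complex poly ^2^2 \<Rightarrow> complex \<Rightarrow> complex^2^2" where
  "res_fin z1 M a = (\<chi> i j. poly (M$i$j) a / poly (pderiv (qpoly z1)) a)"

text \<open>Residue at infinity, in the frame (z^m1, z^m2) of E at infinity, local
  coordinate w = 1/z: Phi = N(w) (-w dw/((1-w)(1-z1 w))) with
  N_ij(w) = w^(m_i - m_j) M_ij(1/w), so the residue is minus the matrix of
  coefficients of z^(m_i - m_j + 2) in M_ij.\<close>
definition res_inf :: "int \<Rightarrow> int \<Rightarrow> complex poly ^2^2 \<Rightarrow> complex^2^2" where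
  "res_inf m1 m2 M = (\<chi> i j. (let e = mdeg m1 m2 i - mdeg m1 m2 j + 2 in
       if e \<ge> 0 then - coeff (M$i$j) (nat e) else 0))"

definition nilpotent_mat :: "complex^2^2 \<Rightarrow> bool" where
  "nilpotent_mat A \<longleftrightarrow> (\<exists>n::nat. (((**) A) ^^ n) (mat 1) = 0)"

definition residue :: "complex \<Rightarrow> int \<Rightarrow> int \<Rightarrow> complex poly ^2^2 \<Rightarrow> nat \<Rightarrow> complex^2^2" where
  "residue z1 m1 m2 M k = (if k = 4 then res_inf m1 m2 M else res_fin z1 M (zpt z1 k))"

text \<open>QPH(E): lines F_k \<subseteq> E|_{z_k} (given by nonzero spanning vectors F k, k = 1..4,
  in the fibre frames above) and a strongly parabolic Higgs field compatible with them.\<close>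
definition QPH :: "complex \<Rightarrow> int \<Rightarrow> int \<Rightarrow> (nat \<Rightarrow> complex^2) \<Rightarrow> complex poly ^2^2 \<Rightarrow> bool" where
  "QPH z1 m1 m2 F M \<longleftrightarrow> higgs_field m1 m2 M \<and>
     (\<forall>k\<in>{1..4}. F k \<noteq> 0 \<and> nilpotent_mat (residue z1 m1 m2 M k)
                 \<and> residue z1 m1 m2 M k *v F k = 0)"

text \<open>det Phi = det(M(z)) (dz/q)^2; it is nonzero iff det M is not identically 0.\<close>
definition det_nonzero :: "complex poly ^2^2 \<Rightarrow> bool" where
  "det_nonzero M \<longleftrightarrow> (\<exists>z. det (evalM M z) \<noteq> 0)"

definition QPH_Cstar_nonempty :: "complex \<Rightarrow> int \<Rightarrow> int \<Rightarrow> bool" where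
  "QPH_Cstar_nonempty z1 m1 m2 \<longleftrightarrow> (\<exists>F M. QPH z1 m1 m2 F M \<and> det_nonzero M)"

text \<open>A line subbundle L \<cong> O(l) of E, given by an injection O(l) \<rightarrow> E, i.e. a pair of
  polynomials (p1, p2) with deg p_i \<le> m_i - l, nowhere vanishing on CP^1
  (no common root in C, and not both coefficients of z^(m_i - l) zero, i.e.
  nonvanishing at infinity).  deg L = l.\<close>
definition line_subbundle :: "int \<Rightarrow> int \<Rightarrow> int \<Rightarrow> complex poly \<Rightarrow> complex poly \<Rightarrow> bool" where
  "line_subbundle m1 m2 l p1 p2 \<longleftrightarrow>
     (\<forall>k. coeff p1 k \<noteq> 0 \<longrightarrow> int k \<le> m1 - l) \<and>
     (\<forall>k. coeff p2 k \<noteq> 0 \<longrightarrow> int k \<le> m2 - l) \<and>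
     (\<forall>z. poly p1 z \<noteq> 0 \<or> poly p2 z \<noteq> 0) \<and>
     ((m1 - l \<ge> 0 \<and> coeff p1 (nat (m1 - l)) \<noteq> 0) \<or> (m2 - l \<ge> 0 \<and> coeff p2 (nat (m2 - l)) \<noteq> 0))"

text \<open>Phi is nilpotent (pointwise, as an endomorphism field).\<close>
definition nilpotent_field :: "complex poly ^2^2 \<Rightarrow> bool" where
  "nilpotent_field M \<longleftrightarrow> (\<forall>z. nilpotent_mat (evalM M z))"

text \<open>L(Phi) = L: the line subbundle L is the kernel of Phi (Phi annihilates L;
  for nonzero nilpotent Phi its kernel is a line subbundle, so L \<subseteq> ker Phi
  forces equality).\<close>
definition invariant_line_is :: "complex poly ^2^2 \<Rightarrow> complex poly \<Rightarrow> complex poly \<Rightarrow> bool" where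
  "invariant_line_is M p1 p2 \<longleftrightarrow> (\<forall>z. evalM M z *v vector [poly p1 z, poly p2 z] = 0)"

end

theory Submission
  imports Defs "HOL-Computational_Algebra.Fundamental_Theorem_Algebra" "HOL-Computational_Algebra.Polynomial_Factorial" "HOL-Computational_Algebra.Field_as_Ring" begin


lemma mm2: "((A::complex^2^2) ** B) $ i $ j = A$i$1 * B$1$j + A$i$2 * B$2$j"
  by (simp add: matrix_matrix_mult_def sum_2)

lemma mv2: "((A::complex^2^2) *v x) $ i = A$i$1 * x$1 + A$i$2 * x$2"
  by (simp add: matrix_vector_mult_def sum_2)

lemma mat_eq2: "(A::complex^2^2) = B \<longleftrightarrow> A$1$1 = B$1$1 \<and> A$1$2 = B$1$2 \<and> A$2$1 = B$2$1 \<and> A$2$2 = B$2$2"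
  by (auto simp: vec_eq_iff forall_2)

lemma vec_eq2: "(x::complex^2) = y \<longleftrightarrow> x$1 = y$1 \<and> x$2 = y$2"
  by (auto simp: vec_eq_iff forall_2)

lemma nilp_imp:
  fixes A :: "complex^2^2"
  assumes "nilpotent_mat A"
  shows "A$1$1 + A$2$2 = 0 \<and> A$1$1 * A$2$2 - A$1$2 * A$2$1 = 0"
proof -
  define t where "t = A$1$1 + A$2$2"
  define P where "P n = (((**) A) ^^ n) (mat 1)" for n
  obtain n where n: "P n = 0" using assms unfolding nilpotent_mat_def P_def by blast
  have dP: "det (P k) = det A ^ k" for k
    by (induction k) (simp_all add: P_def det_mul)
  have "n \<noteq> 0"
  proof
    assume "n = 0"
    then have "(mat 1::complex^2^2) = 0" using n by (simp add: P_def)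
    then have "(mat 1::complex^2^2)$1$1 = 0" by simp
    thus False by (simp add: mat_def)
  qed
  have "det (0::complex^2^2) = 0" by (simp add: det_2)
  hence d0: "det A = 0" using dP[of n] n \<open>n \<noteq> 0\<close> by simp
  hence d0': "A$1$1 * A$2$2 - A$1$2 * A$2$1 = 0" by (simp add: det_2)
  have PS: "P (Suc k) $ i $ j = t ^ k * A $ i $ j" for k i j
  proof (induction k arbitrary: i j)
    case 0 then show ?case by (simp add: P_def)
  next
    case (Suc k)
    have "P (Suc (Suc k)) = A ** P (Suc k)" by (simp add: P_def)
    hence "P (Suc (Suc k)) $ i $ j = A$i$1 * (t^k * A$1$j) + A$i$2 * (t^k * A$2$j)"
      by (simp add: mm2 Suc)
    also have "\<dots> = t^(Suc k) * A$i$j"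
      using exhaust_2[of i] exhaust_2[of j] d0' unfolding t_def
      by (auto simp: algebra_simps power2_eq_square)
    finally show ?case .
  qed
  obtain k where k: "n = Suc k" using \<open>n \<noteq> 0\<close> not0_implies_Suc by blast
  have z: "t ^ k * A $ i $ j = 0" for i j using PS[of k i j] n k by simp
  have "t = 0"
  proof (rule ccontr)
    assume "t \<noteq> 0"
    hence "A $ i $ j = 0" for i j using z[of i j] by simp
    thus False using \<open>t \<noteq> 0\<close> unfolding t_def by simp
  qed
  thus ?thesis using d0' t_def by simp
qed

lemma nilp_intro:
  fixes A :: "complex^2^2"
  assumes "A$1$1 + A$2$2 = 0" "A$1$1 * A$2$2 - A$1$2 * A$2$1 = 0"
  shows "nilpotent_mat A"
proof -
  have "A ** A = 0"
  proof -
    have d: "A$2$2 = - A$1$1" using assms(1) by (metis add.commute eq_neg_iff_add_eq_0)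
    show ?thesis unfolding mat_eq2 mm2 using assms(2) unfolding d
      by (simp add: algebra_simps power2_eq_square) (metis neg_eq_iff_add_eq_0)
  qed
  hence "(((**) A) ^^ 2) (mat 1) = 0" by (simp add: numeral_2_eq_2)
  thus ?thesis unfolding nilpotent_mat_def by blast
qed

lemma ker_exists:
  fixes A :: "complex^2^2"
  assumes "A$1$1 * A$2$2 - A$1$2 * A$2$1 = 0"
  shows "\<exists>x. x \<noteq> 0 \<and> A *v x = 0"
proof (cases "A$1$1 = 0 \<and> A$1$2 = 0")
  case False
  show ?thesis
    apply (rule exI[of _ "vector [A$1$2, - A$1$1]"])
    using False assms by (auto simp: vec_eq2 mv2 algebra_simps)
next
  case T: True
  show ?thesis
  proof (cases "A$2$1 = 0 \<and> A$2$2 = 0")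
    case True
    show ?thesis
      apply (rule exI[of _ "vector [1, 0]"])
      using T True by (auto simp: vec_eq2 mv2)
  next
    case False
    show ?thesis
      apply (rule exI[of _ "vector [A$2$2, - A$2$1]"])
      using False T by (auto simp: vec_eq2 mv2 algebra_simps)
  qed
qed



definition bnd :: "complex poly \<Rightarrow> int \<Rightarrow> bool" where
  "bnd p A \<longleftrightarrow> (\<forall>k. coeff p k \<noteq> 0 \<longrightarrow> int k \<le> A)"

lemma bnd_iff: "bnd p A \<longleftrightarrow> p = 0 \<or> int (degree p) \<le> A"
proof
  assume a: "bnd p A"
  show "p = 0 \<or> int (degree p) \<le> A"
  proof (cases "p = 0")
    case False
    hence "coeff p (degree p) \<noteq> 0" by simp
    thus ?thesis using a unfolding bnd_def by blast
  qed simp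
next
  assume a: "p = 0 \<or> int (degree p) \<le> A"
  show "bnd p A" unfolding bnd_def
  proof (intro allI impI)
    fix k assume k: "coeff p k \<noteq> 0"
    hence "p \<noteq> 0" "k \<le> degree p" using le_degree by auto
    thus "int k \<le> A" using a by linarith
  qed
qed

lemma bnd_mult: "bnd p A \<Longrightarrow> bnd q B \<Longrightarrow> bnd (p*q) (A+B)"
proof -
  assume a: "bnd p A" "bnd q B"
  show ?thesis
  proof (cases "p = 0 \<or> q = 0")
    case True then show ?thesis unfolding bnd_def by auto
  next
    case False
    hence "degree (p*q) = degree p + degree q" by (simp add: degree_mult_eq)
    moreover have "int (degree p) \<le> A" "int (degree q) \<le> B" using a False unfolding bnd_iff by auto
    ultimately show ?thesis unfolding bnd_iff by simp
  qed
qed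

lemma bnd_neg: "bnd p A \<Longrightarrow> A < 0 \<Longrightarrow> p = 0"
  unfolding bnd_iff by auto

lemma bnd_mono: "bnd p A \<Longrightarrow> A \<le> B \<Longrightarrow> bnd p B"
  unfolding bnd_def by force

lemma bnd_minus: "bnd (-p) A = bnd p A"
  unfolding bnd_def by simp

lemma coeff_mult_bound:
  fixes p q :: "complex poly"
  assumes "degree p \<le> a" "degree q \<le> b"
  shows "coeff (p*q) (a+b) = coeff p a * coeff q b"
proof (cases "degree p = a \<and> degree q = b")
  case True
  then show ?thesis using coeff_mult_degree_sum[of p q] by simp
next
  case False
  hence "coeff p a * coeff q b = 0" using assms
    by (metis le_neq_implies_less coeff_eq_0 mult_eq_0_iff)
  moreover have "coeff (p*q) (a+b) = 0"
  proof (cases "p = 0 \<or> q = 0")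
    case True then show ?thesis by auto
  next
    case F: False
    have "degree (p*q) = degree p + degree q" using F by (simp add: degree_mult_eq)
    also have "\<dots> < a + b" using False assms by auto
    finally show ?thesis by (simp add: coeff_eq_0)
  qed
  ultimately show ?thesis by simp
qed

lemma noroot_deg0:
  fixes p :: "complex poly"
  assumes "\<forall>z. poly p z \<noteq> 0"
  shows "degree p = 0"
  using fundamental_theorem_of_algebra[of p] assms constant_degree[of p] by blast

lemma coprime_noroots:
  fixes p1 p2 :: "complex poly"
  assumes "\<forall>z. poly p1 z \<noteq> 0 \<or> poly p2 z \<noteq> 0"
  shows "coprime p1 p2"
proof -
  define g where "g = gcd p1 p2"
  have "\<forall>z. poly g z \<noteq> 0"
  proof
    fix z show "poly g z \<noteq> 0"
    proof
      assume "poly g z = 0"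
      moreover have "g dvd p1" "g dvd p2" by (simp_all add: g_def)
      ultimately have "poly p1 z = 0" "poly p2 z = 0"
        by (metis dvd_def mult_eq_0_iff poly_mult)+
      thus False using assms by auto
    qed
  qed
  hence "degree g = 0" by (rule noroot_deg0)
  moreover have "g \<noteq> 0" using \<open>\<forall>z. poly g z \<noteq> 0\<close> by auto
  ultimately have "is_unit g" by (simp add: is_unit_iff_degree)
  thus ?thesis unfolding g_def using is_unit_gcd by blast
qed

lemma lin_zero:
  fixes p :: "complex poly"
  assumes "\<forall>k\<ge>2. coeff p k = 0" "poly p 0 = 0" "poly p 1 = 0"
  shows "p = 0"
proof -
  have e: "p = [:coeff p 0, coeff p 1:]"
  proof (rule poly_eqI)
    fix n show "coeff p n = coeff [:coeff p 0, coeff p 1:] n"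
      using assms(1) by (cases n; cases "n - 1") (auto simp: coeff_pCons)
  qed
  have "coeff p 0 = 0" using assms(2) by (simp add: poly_0_coeff_0)
  moreover have "poly [:coeff p 0, coeff p 1:] 1 = 0" using e assms(3) by metis
  ultimately have "coeff p 1 = 0" by simp
  thus ?thesis using e \<open>coeff p 0 = 0\<close> by (metis pCons_0_0)
qed

lemma qpoly_expand: "qpoly z1 = [:0, z1, -(1+z1), 1:]"
  by (simp add: qpoly_def algebra_simps)

lemma dq_vals: "poly (pderiv (qpoly z1)) 0 = z1" "poly (pderiv (qpoly z1)) 1 = 1 - z1"
   "poly (pderiv (qpoly z1)) z1 = z1 * (z1 - 1)"
  by (simp_all add: qpoly_expand pderiv_pCons algebra_simps power2_eq_square)

lemma q_roots: "poly (qpoly z1) 0 = 0" "poly (qpoly z1) 1 = 0" "poly (qpoly z1) z1 = 0"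
  by (simp_all add: qpoly_def)



lemma diag0:
  fixes A :: "complex^2^2"
  assumes "nilpotent_mat A" "A$2$1 = 0"
  shows "A$1$1 = 0 \<and> A$2$2 = 0"
  using nilp_imp[OF assms(1)] assms(2)
  by (metis add.commute add_cancel_right_left eq_neg_iff_add_eq_0 mult_eq_0_iff mult_zero_right diff_zero neg_0_equal_iff_equal)

lemma res_fin_entry: "res_fin z1 M a $ i $ j = poly (M$i$j) a / poly (pderiv (qpoly z1)) a"
  by (simp add: res_fin_def)

lemma res_inf_entry: "res_inf m1 m2 M $ i $ j = (if mdeg m1 m2 i - mdeg m1 m2 j + 2 \<ge> 0
   then - coeff (M$i$j) (nat (mdeg m1 m2 i - mdeg m1 m2 j + 2)) else 0)"
  by (simp add: res_inf_def Let_def)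

lemma mdeg_simps[simp]: "mdeg m1 m2 1 = m1" "mdeg m1 m2 2 = m2"
  by (simp_all add: mdeg_def)

lemma residue_simps: "residue z1 m1 m2 M 1 = res_fin z1 M z1"
  "residue z1 m1 m2 M 2 = res_fin z1 M 0" "residue z1 m1 m2 M 3 = res_fin z1 M 1"
  "residue z1 m1 m2 M 4 = res_inf m1 m2 M"
  by (simp_all add: residue_def zpt_def)

lemma hf_bnd: "higgs_field m1 m2 M \<Longrightarrow> bnd (M$i$j) (mdeg m1 m2 i - mdeg m1 m2 j + 2)"
  unfolding higgs_field_def bnd_def by blast

lemma part1_neg:
  assumes "z1 \<noteq> 0" "z1 \<noteq> 1" "m1 - m2 > 2" "QPH z1 m1 m2 F M"
  shows "\<not> det_nonzero M"
proof -
  have hf: "higgs_field m1 m2 M" and res: "\<And>k. k\<in>{1..4} \<Longrightarrow> nilpotent_mat (residue z1 m1 m2 M k)"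
    using assms(4) unfolding QPH_def by auto
  have "bnd (M$2$1) (m2 - m1 + 2)" using hf_bnd[OF hf, of 2 1] by simp
  hence M21: "M$2$1 = 0" using assms(3) bnd_neg by auto
  have bd: "bnd (M$i$i) 2" for i using hf_bnd[OF hf, of i i] by simp
  have R2: "nilpotent_mat (res_fin z1 M 0)" using res[of 2] by (simp add: residue_simps)
  have R3: "nilpotent_mat (res_fin z1 M 1)" using res[of 3] by (simp add: residue_simps)
  have R4: "nilpotent_mat (res_inf m1 m2 M)" using res[of 4] by (simp add: residue_simps)
  have "poly (M$1$1) 0 = 0 \<and> poly (M$2$2) 0 = 0"
    using diag0[OF R2] M21 assms(1) by (simp add: res_fin_entry dq_vals)
  moreover have "poly (M$1$1) 1 = 0 \<and> poly (M$2$2) 1 = 0"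
    using diag0[OF R3] M21 assms(2) by (simp add: res_fin_entry dq_vals)
  moreover have "coeff (M$1$1) 2 = 0 \<and> coeff (M$2$2) 2 = 0"
    using diag0[OF R4] assms(3) by (simp add: res_inf_entry)
  moreover have "\<forall>k\<ge>3. coeff (M$i$i) k = 0" for i using bd[of i] unfolding bnd_def by force
  ultimately have "M$1$1 = 0" "M$2$2 = 0"
    using lin_zero[of "M$1$1"] lin_zero[of "M$2$2"]
    by (metis le_antisym not_less_eq_eq numeral_2_eq_2 numeral_3_eq_3)+
  thus ?thesis unfolding det_nonzero_def by (simp add: det_2 evalM_def M21)
qed



lemma qcoeff4: "coeff (qpoly z1) 4 = 0"
  by (simp add: qpoly_expand eval_nat_numeral)

lemma hf_iff: "higgs_field m1 m2 M \<longleftrightarrow> bnd (M$1$1) 2 \<and> bnd (M$1$2) (m1-m2+2) \<and> bnd (M$2$1) (m2-m1+2) \<and> bnd (M$2$2) 2"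
  (is "_ \<longleftrightarrow> ?R")
proof -
  have "higgs_field m1 m2 M \<longleftrightarrow> (\<forall>i j. bnd (M$i$j) (mdeg m1 m2 i - mdeg m1 m2 j + 2))"
    by (simp add: higgs_field_def bnd_def)
  also have "\<dots> \<longleftrightarrow> ?R" by (simp add: forall_2)
  finally show ?thesis .
qed

lemma QPH_intro:
  assumes "higgs_field m1 m2 M"
  and "\<And>k. k \<in> {1..4} \<Longrightarrow> residue z1 m1 m2 M k $1$1 + residue z1 m1 m2 M k $2$2 = 0 \<and>
     residue z1 m1 m2 M k $1$1 * residue z1 m1 m2 M k $2$2 - residue z1 m1 m2 M k $1$2 * residue z1 m1 m2 M k $2$1 = 0"
  shows "\<exists>F. QPH z1 m1 m2 F M"
proof -
  define F where "F k = (SOME x. x \<noteq> 0 \<and> residue z1 m1 m2 M k *v x = 0)" for k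
  have "F k \<noteq> 0 \<and> residue z1 m1 m2 M k *v F k = 0 \<and> nilpotent_mat (residue z1 m1 m2 M k)" if "k \<in> {1..4}" for k
  proof -
    have "\<exists>x. x \<noteq> 0 \<and> residue z1 m1 m2 M k *v x = 0" using ker_exists assms(2)[OF that] by blast
    hence "F k \<noteq> 0 \<and> residue z1 m1 m2 M k *v F k = 0" unfolding F_def by (rule someI_ex)
    moreover have "nilpotent_mat (residue z1 m1 m2 M k)" using nilp_intro assms(2)[OF that] by blast
    ultimately show ?thesis by blast
  qed
  thus ?thesis using assms(1) unfolding QPH_def by blast
qed

lemma res_fin_ok:
  assumes "poly (M$1$1) a + poly (M$2$2) a = 0"
    "poly (M$1$1) a * poly (M$2$2) a - poly (M$1$2) a * poly (M$2$1) a = 0"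
  shows "res_fin z1 M a $1$1 + res_fin z1 M a $2$2 = 0 \<and>
     res_fin z1 M a $1$1 * res_fin z1 M a $2$2 - res_fin z1 M a $1$2 * res_fin z1 M a $2$1 = 0"
proof -
  define c where "c = poly (pderiv (qpoly z1)) a"
  have "res_fin z1 M a $1$1 + res_fin z1 M a $2$2 = (poly (M$1$1) a + poly (M$2$2) a) / c"
    by (simp add: res_fin_entry c_def add_divide_distrib)
  moreover have "res_fin z1 M a $1$1 * res_fin z1 M a $2$2 - res_fin z1 M a $1$2 * res_fin z1 M a $2$1
     = (poly (M$1$1) a * poly (M$2$2) a - poly (M$1$2) a * poly (M$2$1) a) / (c*c)"
    by (simp add: res_fin_entry c_def diff_divide_distrib)
  ultimately show ?thesis using assms by simp
qed

lemma part1_pos: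
  assumes "m1 \<ge> m2" "m1 - m2 \<le> 2"
  shows "QPH_Cstar_nonempty z1 m1 m2"
proof (cases "m1 - m2 \<ge> 1")
  case True
  define M :: "complex poly^2^2" where "M = vector [vector [0, qpoly z1], vector [1, 0]]"
  have e: "M$1$1 = 0" "M$1$2 = qpoly z1" "M$2$1 = 1" "M$2$2 = 0" by (simp_all add: M_def)
  have qd: "degree (qpoly z1) = 3" "qpoly z1 \<noteq> 0" by (simp_all add: qpoly_expand)
  have hf: "higgs_field m1 m2 M" unfolding hf_iff e bnd_iff using qd True assms by auto
  have "\<exists>F. QPH z1 m1 m2 F M"
  proof (rule QPH_intro[OF hf])
    fix k :: nat assume k: "k \<in> {1..4}"
    show "residue z1 m1 m2 M k $1$1 + residue z1 m1 m2 M k $2$2 = 0 \<and>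
     residue z1 m1 m2 M k $1$1 * residue z1 m1 m2 M k $2$2 - residue z1 m1 m2 M k $1$2 * residue z1 m1 m2 M k $2$1 = 0"
    proof (cases "k = 4")
      case True
      have "m1 - m2 = 1 \<or> m1 - m2 = 2" using \<open>m1 - m2 \<ge> 1\<close> assms by auto
      then show ?thesis using True
        by (auto simp: residue_simps res_inf_entry e qcoeff4)
    next
      case False
      have rf: "res_fin z1 M a $1$1 + res_fin z1 M a $2$2 = 0 \<and>
         res_fin z1 M a $1$1 * res_fin z1 M a $2$2 - res_fin z1 M a $1$2 * res_fin z1 M a $2$1 = 0"
        if "poly (qpoly z1) a = 0" for a
        by (rule res_fin_ok) (simp_all add: e that)
      consider "k = 1" | "k = 2" | "k = 3" using k False by fastforce
      then show ?thesis
      proof cases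
        case 1 show ?thesis unfolding 1 residue_simps by (rule rf[OF q_roots(3)])
      next
        case 2 show ?thesis unfolding 2 residue_simps by (rule rf[OF q_roots(1)])
      next
        case 3 show ?thesis unfolding 3 residue_simps by (rule rf[OF q_roots(2)])
      qed
    qed
  qed
  moreover have "det_nonzero M"
  proof -
    obtain z where "poly (qpoly z1) z \<noteq> 0" using qd(2) poly_all_0_iff_0 by blast
    thus ?thesis unfolding det_nonzero_def by (auto simp: det_2 evalM_def e)
  qed
  ultimately show ?thesis unfolding QPH_Cstar_nonempty_def by blast
next
  case False
  hence d0: "m1 = m2" using assms by auto
  define b :: "complex poly" where "b = [:0, -1, 1:]"
  define c :: "complex poly" where "c = [:-z1, 1:]"
  define M :: "complex poly^2^2" where "M = vector [vector [0, b], vector [c, 0]]"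
  have e: "M$1$1 = 0" "M$1$2 = b" "M$2$1 = c" "M$2$2 = 0" by (simp_all add: M_def)
  have hf: "higgs_field m1 m2 M" unfolding hf_iff e bnd_iff using d0 by (auto simp: b_def c_def)
  have "\<exists>F. QPH z1 m1 m2 F M"
  proof (rule QPH_intro[OF hf])
    fix k :: nat assume k: "k \<in> {1..4}"
    show "residue z1 m1 m2 M k $1$1 + residue z1 m1 m2 M k $2$2 = 0 \<and>
     residue z1 m1 m2 M k $1$1 * residue z1 m1 m2 M k $2$2 - residue z1 m1 m2 M k $1$2 * residue z1 m1 m2 M k $2$1 = 0"
    proof (cases "k = 4")
      case True
      have "coeff b 2 = 1" "coeff c 2 = 0" by (simp_all add: b_def c_def eval_nat_numeral)
      then show ?thesis using d0 unfolding True residue_simps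
        by (auto simp: res_inf_entry e)
    next
      case False
      have rf: "res_fin z1 M a $1$1 + res_fin z1 M a $2$2 = 0 \<and>
         res_fin z1 M a $1$1 * res_fin z1 M a $2$2 - res_fin z1 M a $1$2 * res_fin z1 M a $2$1 = 0"
        if "poly b a * poly c a = 0" for a
        by (rule res_fin_ok) (simp_all add: e that)
      consider "k = 1" | "k = 2" | "k = 3" using k False by fastforce
      then show ?thesis
      proof cases
        case 1 show ?thesis unfolding 1 residue_simps by (rule rf) (simp add: c_def)
      next
        case 2 show ?thesis unfolding 2 residue_simps by (rule rf) (simp add: b_def)
      next
        case 3 show ?thesis unfolding 3 residue_simps by (rule rf) (simp add: b_def)
      qed
    qed
  qed
  moreover have "det_nonzero M"
  proof -
    have "b * c \<noteq> 0" by (simp add: b_def c_def)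
    then obtain z where "poly (b*c) z \<noteq> 0" using poly_all_0_iff_0 by blast
    thus ?thesis unfolding det_nonzero_def by (auto simp: det_2 evalM_def e)
  qed
  ultimately show ?thesis unfolding QPH_Cstar_nonempty_def by blast
qed



lemma coeff3:
  fixes w p q :: "complex poly"
  assumes "degree w \<le> a" "degree p \<le> b" "degree q \<le> c"
  shows "coeff (w*p*q) (a+b+c) = coeff w a * coeff p b * coeff q c"
proof -
  have "degree (w*p) \<le> a + b" using assms degree_mult_le[of w p] by linarith
  hence "coeff ((w*p)*q) ((a+b)+c) = coeff (w*p) (a+b) * coeff q c"
    using assms(3) by (rule coeff_mult_bound)
  thus ?thesis using coeff_mult_bound[OF assms(1,2)] by simp
qed

lemma part2_pos:
  assumes "m1 \<ge> m2" "line_subbundle m1 m2 l p1 p2" "2 * (l + 1) \<ge> m1 + m2"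
  shows "\<exists>F M. QPH z1 m1 m2 F M \<and> M \<noteq> 0 \<and> nilpotent_field M \<and> invariant_line_is M p1 p2"
proof -
  define s where "s = 2*l - m1 - m2 + 2"
  have s0: "s \<ge> 0" using assms(3) by (simp add: s_def)
  define w :: "complex poly" where "w = monom 1 (nat s)"
  have b1: "bnd p1 (m1 - l)" and b2: "bnd p2 (m2 - l)"
    and nv: "\<forall>z. poly p1 z \<noteq> 0 \<or> poly p2 z \<noteq> 0"
    and top: "(m1 - l \<ge> 0 \<and> coeff p1 (nat (m1 - l)) \<noteq> 0) \<or> (m2 - l \<ge> 0 \<and> coeff p2 (nat (m2 - l)) \<noteq> 0)"
    using assms(2) unfolding line_subbundle_def bnd_def by auto
  have bw: "bnd w s" unfolding bnd_iff w_def using s0 by (simp add: degree_monom_eq)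
  have w0: "w \<noteq> 0" by (simp add: w_def)
  define M :: "complex poly^2^2" where
    "M = vector [vector [-(w*p1*p2), w*p1*p1], vector [-(w*p2*p2), w*p1*p2]]"
  have e: "M$1$1 = -(w*p1*p2)" "M$1$2 = w*p1*p1" "M$2$1 = -(w*p2*p2)" "M$2$2 = w*p1*p2"
    by (simp_all add: M_def)
  have hf: "higgs_field m1 m2 M" unfolding hf_iff e bnd_minus
  proof (intro conjI)
    show "bnd (w*p1*p2) 2" "bnd (w*p1*p2) 2"
      using bnd_mult[OF bnd_mult[OF bw b1] b2] by (simp_all add: s_def)
    show "bnd (w*p1*p1) (m1 - m2 + 2)"
      by (rule bnd_mono[OF bnd_mult[OF bnd_mult[OF bw b1] b1]]) (simp add: s_def)
    show "bnd (w*p2*p2) (m2 - m1 + 2)"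
      by (rule bnd_mono[OF bnd_mult[OF bnd_mult[OF bw b2] b2]]) (simp add: s_def)
  qed
  have Mnz: "M \<noteq> 0"
  proof
    assume "M = 0"
    hence "w*p1*p1 = 0" "w*p2*p2 = 0" using e by (auto simp: mat_eq2)
    hence "p1 = 0" "p2 = 0" using w0 by auto
    thus False using nv by auto
  qed
  have nf: "nilpotent_field M" unfolding nilpotent_field_def
  proof
    fix z
    show "nilpotent_mat (evalM M z)"
      by (rule nilp_intro) (simp_all add: evalM_def e algebra_simps)
  qed
  have il: "invariant_line_is M p1 p2" unfolding invariant_line_is_def
    by (simp add: vec_eq2 mv2 evalM_def e algebra_simps)
  have "\<exists>F. QPH z1 m1 m2 F M"
  proof (rule QPH_intro[OF hf])
    fix k :: nat assume k: "k \<in> {1..4}"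
    show "residue z1 m1 m2 M k $1$1 + residue z1 m1 m2 M k $2$2 = 0 \<and>
     residue z1 m1 m2 M k $1$1 * residue z1 m1 m2 M k $2$2 - residue z1 m1 m2 M k $1$2 * residue z1 m1 m2 M k $2$1 = 0"
    proof (cases "k = 4")
      case False
      have rf: "res_fin z1 M a $1$1 + res_fin z1 M a $2$2 = 0 \<and>
         res_fin z1 M a $1$1 * res_fin z1 M a $2$2 - res_fin z1 M a $1$2 * res_fin z1 M a $2$1 = 0" for a
        by (rule res_fin_ok) (simp_all add: e algebra_simps)
      have "residue z1 m1 m2 M k = res_fin z1 M (zpt z1 k)" using False by (simp add: residue_def)
      then show ?thesis using rf by simp
    next
      case True
      show ?thesis
      proof (cases "m2 - l \<ge> 0")
        case False
        hence "p2 = 0" using b2 bnd_neg by auto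
        then show ?thesis unfolding True residue_simps by (simp add: res_inf_entry e)
      next
        case True2: True
        define n1 where "n1 = nat (m1 - l)"
        define n2 where "n2 = nat (m2 - l)"
        define ns where "ns = nat s"
        have dp1: "degree p1 \<le> n1" using b1 True2 assms(1) unfolding bnd_iff n1_def by auto
        have dp2: "degree p2 \<le> n2" using b2 True2 unfolding bnd_iff n2_def by auto
        have dw: "degree w \<le> ns" by (simp add: w_def ns_def degree_monom_le)
        have cw: "coeff w ns = 1" by (simp add: w_def ns_def)
        have i11: "nat 2 = ns + n1 + n2" using True2 assms(1) s0 by (simp add: ns_def n1_def n2_def s_def)
        have i12: "nat (m1 - m2 + 2) = ns + n1 + n1" using True2 assms(1) s0 by (simp add: ns_def n1_def n2_def s_def)
        have i21: "nat (m2 - m1 + 2) = ns + n2 + n2" using True2 assms(1) s0 by (simp add: ns_def n1_def n2_def s_def)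
        have g21: "m2 - m1 + 2 \<ge> 0" using True2 s0 by (simp add: s_def)
        have c11: "coeff (w*p1*p2) (nat 2) = coeff p1 n1 * coeff p2 n2"
          unfolding i11 using coeff3[OF dw dp1 dp2] cw by simp
        have c12: "coeff (w*p1*p1) (nat (m1 - m2 + 2)) = coeff p1 n1 * coeff p1 n1"
          unfolding i12 using coeff3[OF dw dp1 dp1] cw by simp
        have c21: "coeff (w*p2*p2) (nat (m2 - m1 + 2)) = coeff p2 n2 * coeff p2 n2"
          unfolding i21 using coeff3[OF dw dp2 dp2] cw by simp
        have i11': "(2::nat) = ns + n1 + n2" using i11 by simp
        have c11': "coeff (w*p1*p2) 2 = coeff p1 n1 * coeff p2 n2"
        proof -
          have "coeff (w*p1*p2) (ns+n1+n2) = coeff p1 n1 * coeff p2 n2" using coeff3[OF dw dp1 dp2] cw by simp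
          thus ?thesis by (simp only: i11'[symmetric])
        qed
        have r11: "res_inf m1 m2 M $1$1 = coeff p1 n1 * coeff p2 n2"
          unfolding res_inf_entry mdeg_simps e coeff_minus by (simp add: c11')
        have r22: "res_inf m1 m2 M $2$2 = - (coeff p1 n1 * coeff p2 n2)"
          unfolding res_inf_entry mdeg_simps e coeff_minus by (simp add: c11')
        have r12: "res_inf m1 m2 M $1$2 = - (coeff p1 n1 * coeff p1 n1)"
          unfolding res_inf_entry mdeg_simps e c12 using assms(1) by simp
        have r21: "res_inf m1 m2 M $2$1 = coeff p2 n2 * coeff p2 n2"
          unfolding res_inf_entry mdeg_simps e coeff_minus c21 using g21 by simp
        show ?thesis unfolding True residue_simps r11 r22 r12 r21
          by (simp add: algebra_simps)
      qed
    qed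
  qed
  thus ?thesis using Mnz nf il by blast
qed



lemma mat_eq2p: "(A::complex poly^2^2) = B \<longleftrightarrow> A$1$1 = B$1$1 \<and> A$1$2 = B$1$2 \<and> A$2$1 = B$2$1 \<and> A$2$2 = B$2$2"
  by (auto simp: vec_eq_iff forall_2)

lemma part2_neg:
  assumes "m1 \<ge> m2" "line_subbundle m1 m2 l p1 p2" "QPH z1 m1 m2 F M" "M \<noteq> 0"
    "nilpotent_field M" "invariant_line_is M p1 p2"
  shows "2 * (l + 1) \<ge> m1 + m2"
proof (rule ccontr)
  assume "\<not> 2 * (l + 1) \<ge> m1 + m2"
  hence big: "(m1 - l) + (m2 - l) \<ge> 3" by simp
  have hf: "higgs_field m1 m2 M" using assms(3) unfolding QPH_def by blast
  have b1: "bnd p1 (m1 - l)" and b2: "bnd p2 (m2 - l)"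
    and nv: "\<forall>z. poly p1 z \<noteq> 0 \<or> poly p2 z \<noteq> 0"
    and top: "(m1 - l \<ge> 0 \<and> coeff p1 (nat (m1 - l)) \<noteq> 0) \<or> (m2 - l \<ge> 0 \<and> coeff p2 (nat (m2 - l)) \<noteq> 0)"
    using assms(2) unfolding line_subbundle_def bnd_def by auto
  have cop: "coprime p1 p2" using nv by (rule coprime_noroots)
  have tr: "M$1$1 + M$2$2 = 0"
  proof -
    have "poly (M$1$1 + M$2$2) z = 0" for z
      using nilp_imp[of "evalM M z"] assms(5) unfolding nilpotent_field_def by (simp add: evalM_def)
    thus ?thesis using poly_all_0_iff_0 by blast
  qed
  have k1: "M$1$1 * p1 + M$1$2 * p2 = 0" and k2: "M$2$1 * p1 + M$2$2 * p2 = 0"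
  proof -
    have "poly (M$1$1 * p1 + M$1$2 * p2) z = 0 \<and> poly (M$2$1 * p1 + M$2$2 * p2) z = 0" for z
      using assms(6) unfolding invariant_line_is_def
      by (auto simp: vec_eq2 mv2 evalM_def dest: spec[of _ z])
    thus "M$1$1 * p1 + M$1$2 * p2 = 0" "M$2$1 * p1 + M$2$2 * p2 = 0"
      using poly_all_0_iff_0 by blast+
  qed
  have M22: "M$2$2 = - M$1$1" using tr by (simp add: eq_neg_iff_add_eq_0 add.commute)
  have e2: "p1 * M$2$1 = p2 * M$1$1" using k2 unfolding M22 by (simp add: algebra_simps)
  have e1: "p2 * M$1$2 = - (p1 * M$1$1)" using k1 by (simp add: algebra_simps eq_neg_iff_add_eq_0)
  have "p1 dvd p2 * M$1$1" using e2 by (metis dvd_triv_left)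
  hence d1: "p1 dvd M$1$1" using cop by (simp add: coprime_dvd_mult_right_iff)
  have "p2 dvd p1 * M$1$1" using e1 by (metis dvd_minus_iff dvd_triv_left)
  hence d2: "p2 dvd M$1$1" using cop by (simp add: coprime_dvd_mult_right_iff coprime_commute)
  have "p1 * p2 dvd M$1$1" using d1 d2 cop by (rule divides_mult)
  then obtain g where g: "M$1$1 = p1 * p2 * g" by (auto elim: dvdE)
  show False
  proof (cases "p2 = 0")
    case True
    hence "is_unit p1" using cop by simp
    hence "degree p1 = 0" by (metis is_unit_iff_degree not_is_unit_0)
    moreover have "m1 - l \<ge> 0" "coeff p1 (nat (m1 - l)) \<noteq> 0" using top True by auto
    ultimately have "m1 - l = 0" using le_degree by fastforce
    thus False using big assms(1) by linarith
  next
    case p2nz: False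
    show False
    proof (cases "p1 = 0")
      case True
      hence "is_unit p2" using cop by simp
      hence "degree p2 = 0" by (metis is_unit_iff_degree not_is_unit_0)
      moreover have "m2 - l \<ge> 0" "coeff p2 (nat (m2 - l)) \<noteq> 0" using top True by auto
      ultimately have a2: "m2 - l = 0" using le_degree by fastforce
      have "M$1$1 = 0" using g True by simp
      moreover hence "M$2$2 = 0" using M22 by simp
      moreover have "M$1$2 = 0" using e1 True p2nz \<open>M$1$1 = 0\<close> by simp
      moreover have "M$2$1 = 0"
        using hf_bnd[OF hf, of 2 1] bnd_neg a2 big by simp
      ultimately have "M = 0" by (simp add: mat_eq2p)
      thus False using assms(4) by simp
    next
      case p1nz: False
      have m12: "M$1$2 = - (p1 * p1 * g)"
      proof -
        have "p2 * M$1$2 = p2 * (- (p1 * p1 * g))" using e1 g by (simp add: algebra_simps)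
        thus ?thesis using p2nz mult_left_cancel by blast
      qed
      have m21: "M$2$1 = p2 * p2 * g"
      proof -
        have "p1 * M$2$1 = p1 * (p2 * p2 * g)" using e2 g by (simp add: algebra_simps)
        thus ?thesis using p1nz by simp
      qed
      have gnz: "g \<noteq> 0"
      proof
        assume "g = 0"
        hence "M = 0" using g m12 m21 M22 by (simp add: mat_eq2p)
        thus False using assms(4) by simp
      qed
      have "bnd (p1*p1*g) (m1 - m2 + 2)" using hf_bnd[OF hf, of 1 2] m12 by (simp add: bnd_minus)
      hence B1: "int (2 * degree p1 + degree g) \<le> m1 - m2 + 2"
        using p1nz gnz unfolding bnd_iff by (simp add: degree_mult_eq)
      have "bnd (p2*p2*g) (m2 - m1 + 2)" using hf_bnd[OF hf, of 2 1] m21 by simp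
      hence B2: "int (2 * degree p2 + degree g) \<le> m2 - m1 + 2"
        using p2nz gnz unfolding bnd_iff by (simp add: degree_mult_eq)
      from top show False
      proof
        assume "m1 - l \<ge> 0 \<and> coeff p1 (nat (m1 - l)) \<noteq> 0"
        hence "nat (m1 - l) \<le> degree p1" using le_degree by blast
        thus False using B1 big \<open>m1 - l \<ge> 0 \<and> _\<close> by linarith
      next
        assume "m2 - l \<ge> 0 \<and> coeff p2 (nat (m2 - l)) \<noteq> 0"
        hence "nat (m2 - l) \<le> degree p2" using le_degree by blast
        thus False using B2 big \<open>m2 - l \<ge> 0 \<and> _\<close> by linarith
      qed
    qed
  qed
qed


theorem lemma4p3:
  fixes z1 :: complex and m1 m2 :: int
  assumes "z1 \<noteq> 0" and "z1 \<noteq> 1" and "m1 \<ge> m2"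
  shows "(QPH_Cstar_nonempty z1 m1 m2 \<longleftrightarrow> m1 - m2 \<le> 2) \<and>
         (\<forall>l p1 p2. line_subbundle m1 m2 l p1 p2 \<longrightarrow>
            ((\<exists>F M. QPH z1 m1 m2 F M \<and> M \<noteq> 0 \<and> nilpotent_field M \<and>
                     invariant_line_is M p1 p2)
             \<longleftrightarrow> 2 * (l + 1) \<ge> m1 + m2))"
proof (intro conjI allI impI iffI)
  assume "QPH_Cstar_nonempty z1 m1 m2"
  then obtain F M where "QPH z1 m1 m2 F M" "det_nonzero M" unfolding QPH_Cstar_nonempty_def by blast
  thus "m1 - m2 \<le> 2" using part1_neg[OF assms(1,2), of m1 m2 F M] by linarith
next
  assume "m1 - m2 \<le> 2"
  thus "QPH_Cstar_nonempty z1 m1 m2" using part1_pos assms(3) by blast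
next
  fix l p1 p2
  assume "line_subbundle m1 m2 l p1 p2" "\<exists>F M. QPH z1 m1 m2 F M \<and> M \<noteq> 0 \<and> nilpotent_field M \<and> invariant_line_is M p1 p2"
  thus "2 * (l + 1) \<ge> m1 + m2" using part2_neg[OF assms(3)] by blast
next
  fix l p1 p2
  assume "line_subbundle m1 m2 l p1 p2" "2 * (l + 1) \<ge> m1 + m2"
  thus "\<exists>F M. QPH z1 m1 m2 F M \<and> M \<noteq> 0 \<and> nilpotent_field M \<and> invariant_line_is M p1 p2"
    using part2_pos[OF assms(3)] by blast
qed

end
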